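(* Let $U$ be a finite set of attributes, $\varphi$ a standard closure operator on $U$, and $X\subseteq U$. Let $\mathrm{LCD}(Y,\Sigma)$ denote the output of the algorithm LinClosureDirect described below on input set $Y\subseteq U$ and implication set $\Sigma$. (i) If $\Sigma$ is the canonical direct unit basis of $\varphi$, then $\mathrm{LCD}(X,\Sigma)=\varphi(X)$. (ii) If $\Sigma$ is the D-basis of $\varphi$, then $\mathrm{LCD}(\varphi_0(X),\Sigma)=\varphi(X)$.
   Context: An implication over $U$ is a pair $A\to B$ with $A,B\subseteq U$; closure $\Sigma(X)$ w.r.t. a set of implications $\Sigma$ is the smallest superset of $X$ that contains $B$ whenever it contains $A$, for each $A\to B\in\Sigma$. A closure operator $\varphi$ on $U$ is standard if for every $a\in U$ the set $\varphi(a)\setminus\{a\}$ is closed, and $\varphi(a)\neq\varphi(b)$ for $a\neq b$. For $c\in U$, $A\subseteq U$ is a minimal generator of $c$ if $c\in\varphi(A)$, $c\notin A$, and no proper subset $A'\subsetneq A$ has $c\in\varphi(A')$. Canonical direct unit basis: $\{A\to c \mid c\in U,\ A \text{ a minimal generator of } c\}$. D-basis: let $\Sigma_0=\{a\to c\mid a,c\in U,\ c\in\varphi(a)\setminus\{a\}\}$ and $\varphi_0(X)$ the closure of $X$ w.r.t. $\Sigma_0$. A minimal generator $A$ of $c$ with $|A|\ge2$ is a minimal D-generator of $c$ if $c\notin\varphi_0(A)$ and for every minimal generator $A'$ of $c$, $A'\subseteq\varphi_0(A)$ implies $A'=A$. The D-basis is $\Sigma_0\cup\{A\to c\mid c\in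 U,\ A\text{ a minimal D-generator of }c\}$. In both bases, implications with equal left-hand side may be merged into a single implication whose right-hand side is the union; all left-hand sides are nonempty. Algorithm LinClosureDirect on input $(Y,\Sigma)$: for each $A\to B\in\Sigma$ set $count[A\to B]:=|A|$, and for each $a\in U$ let $list[a]$ be the set of implications $A\to B\in\Sigma$ with $a\in A$. Set $update:=Y$ and $add:=\emptyset$. While $update\neq\emptyset$: choose $m\in update$, remove $m$ from $update$, and for each $A\to B\in list[m]$ decrement $count[A\to B]$ by one and, if it becomes $0$, set $add:=add\cup B$. Return $Y\cup add$. (Note $update$ is never enlarged.) *)

theory Defs
  imports Main
begin

type_synonym 'a imp = "'a set \<times> 'a set"

definition closure_operator :: "'a set \<Rightarrow> ('a set \<Rightarrow> 'a set) \<Rightarrow> bool" where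
  "closure_operator U \<phi> \<longleftrightarrow>
     (\<forall>X. X \<subseteq> U \<longrightarrow> X \<subseteq> \<phi> X \<and> \<phi> X \<subseteq> U \<and> \<phi> (\<phi> X) = \<phi> X) \<and>
     (\<forall>X Y. X \<subseteq> Y \<and> Y \<subseteq> U \<longrightarrow> \<phi> X \<subseteq> \<phi> Y)"

definition is_closed :: "('a set \<Rightarrow> 'a set) \<Rightarrow> 'a set \<Rightarrow> bool" where
  "is_closed \<phi> X \<longleftrightarrow> \<phi> X = X"

definition standard :: "'a set \<Rightarrow> ('a set \<Rightarrow> 'a set) \<Rightarrow> bool" where
  "standard U \<phi> \<longleftrightarrow>
     (\<forall>a\<in>U. is_closed \<phi> (\<phi> {a} - {a})) \<and>
     (\<forall>a\<in>U. \<forall>b\<in>U. a \<noteq> b \<longrightarrow> \<phi> {a} \<noteq> \<phi> {b})"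

definition imp_closure :: "'a imp set \<Rightarrow> 'a set \<Rightarrow> 'a set" where
  "imp_closure \<Sigma> X = \<Inter> {Z. X \<subseteq> Z \<and> (\<forall>(A, B)\<in>\<Sigma>. A \<subseteq> Z \<longrightarrow> B \<subseteq> Z)}"

definition min_gen :: "'a set \<Rightarrow> ('a set \<Rightarrow> 'a set) \<Rightarrow> 'a set \<Rightarrow> 'a \<Rightarrow> bool" where
  "min_gen U \<phi> A c \<longleftrightarrow> A \<subseteq> U \<and> c \<in> \<phi> A \<and> c \<notin> A \<and> (\<forall>A'. A' \<subset> A \<longrightarrow> c \<notin> \<phi> A')"

definition canonical_direct_unit_basis :: "'a set \<Rightarrow> ('a set \<Rightarrow> 'a set) \<Rightarrow> 'a imp set" where
  "canonical_direct_unit_basis U \<phi> = {(A, {c}) | A c. c \<in> U \<and> min_gen U \<phi> A c}"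

definition Sigma0 :: "'a set \<Rightarrow> ('a set \<Rightarrow> 'a set) \<Rightarrow> 'a imp set" where
  "Sigma0 U \<phi> = {({a}, {c}) | a c. a \<in> U \<and> c \<in> U \<and> c \<in> \<phi> {a} - {a}}"

definition phi0 :: "'a set \<Rightarrow> ('a set \<Rightarrow> 'a set) \<Rightarrow> 'a set \<Rightarrow> 'a set" where
  "phi0 U \<phi> X = imp_closure (Sigma0 U \<phi>) X"

definition min_D_gen :: "'a set \<Rightarrow> ('a set \<Rightarrow> 'a set) \<Rightarrow> 'a set \<Rightarrow> 'a \<Rightarrow> bool" where
  "min_D_gen U \<phi> A c \<longleftrightarrow> min_gen U \<phi> A c \<and> card A \<ge> 2 \<and> c \<notin> phi0 U \<phi> A \<and>
     (\<forall>A'. min_gen U \<phi> A' c \<and> A' \<subseteq> phi0 U \<phi> A \<longrightarrow> A' = A)"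

definition D_basis :: "'a set \<Rightarrow> ('a set \<Rightarrow> 'a set) \<Rightarrow> 'a imp set" where
  "D_basis U \<phi> = Sigma0 U \<phi> \<union> {(A, {c}) | A c. c \<in> U \<and> min_D_gen U \<phi> A c}"

text \<open>The nondeterministic choice of m is modelled by an enumeration list of Y (each element
  processed exactly once, as update is never enlarged).\<close>
definition lcd_step :: "'a imp set \<Rightarrow> 'a \<Rightarrow> ('a imp \<Rightarrow> nat) \<times> 'a set \<Rightarrow> ('a imp \<Rightarrow> nat) \<times> 'a set" where
  "lcd_step \<Sigma> m st = (let count = fst st; add = snd st;
      count' = (\<lambda>i. if i \<in> \<Sigma> \<and> m \<in> fst i then count i - 1 else count i)
    in (count', add \<union> \<Union> {snd i | i. i \<in> \<Sigma> \<and> m \<in> fst i \<and> count' i = 0}))"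

definition lcd_init :: "'a imp set \<Rightarrow> ('a imp \<Rightarrow> nat) \<times> 'a set" where
  "lcd_init \<Sigma> = ((\<lambda>i. card (fst i)), {})"

definition LinClosureDirect :: "'a imp set \<Rightarrow> 'a list \<Rightarrow> 'a set" where
  "LinClosureDirect \<Sigma> order = set order \<union> snd (fold (lcd_step \<Sigma>) order (lcd_init \<Sigma>))"

end

theory Submission
  imports Defs
begin

lemma inU: "Q i \<Longrightarrow> x \<in> snd i \<Longrightarrow> x \<in> \<Union> {snd j | j. Q j}" by blast

lemma lcd_fold:
  assumes fin: "\<forall>i\<in>\<Sigma>. finite (fst i)" and d: "distinct xs"
  shows "(\<forall>i\<in>\<Sigma>. fst (fold (lcd_step \<Sigma>) xs (lcd_init \<Sigma>)) i = card (fst i - set xs)) \<and>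
         snd (fold (lcd_step \<Sigma>) xs (lcd_init \<Sigma>)) = \<Union> {snd i | i. i \<in> \<Sigma> \<and> fst i \<noteq> {} \<and> fst i \<subseteq> set xs}"
  using d
proof (induction xs rule: rev_induct)
  case Nil
  then show ?case by (auto simp: lcd_init_def)
next
  case (snoc m xs)
  define st where "st = fold (lcd_step \<Sigma>) xs (lcd_init \<Sigma>)"
  have mx: "m \<notin> set xs" and dx: "distinct xs" using snoc.prems by auto
  from snoc.IH[OF dx] have IH1: "\<forall>i\<in>\<Sigma>. fst st i = card (fst i - set xs)"
    and IH2: "snd st = \<Union> {snd i | i. i \<in> \<Sigma> \<and> fst i \<noteq> {} \<and> fst i \<subseteq> set xs}"
    by (auto simp: st_def)
  define cnt where "cnt = (\<lambda>i. if i \<in> \<Sigma> \<and> m \<in> fst i then fst st i - 1 else fst st i)"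
  have eq: "fold (lcd_step \<Sigma>) (xs @ [m]) (lcd_init \<Sigma>) =
     (cnt, snd st \<union> \<Union> {snd i | i. i \<in> \<Sigma> \<and> m \<in> fst i \<and> cnt i = 0})"
    unfolding st_def cnt_def by (simp add: lcd_step_def Let_def)
  have c1: "\<forall>i\<in>\<Sigma>. cnt i = card (fst i - set (xs @ [m]))"
  proof
    fix i assume i: "i \<in> \<Sigma>"
    have "fst i - set (xs @ [m]) = (fst i - set xs) - {m}" by auto
    moreover have "finite (fst i - set xs)" using fin i by auto
    ultimately show "cnt i = card (fst i - set (xs @ [m]))"
      using IH1 i mx by (auto simp: cnt_def card_Diff_singleton_if)
  qed
  have z: "cnt i = 0 \<longleftrightarrow> fst i \<subseteq> set (xs @ [m])" if "i \<in> \<Sigma>" for i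
  proof -
    have "finite (fst i - set (xs @ [m]))" using fin that by auto
    then show ?thesis using c1 that by auto
  qed
  have c2: "snd st \<union> \<Union> {snd i | i. i \<in> \<Sigma> \<and> m \<in> fst i \<and> cnt i = 0} =
      \<Union> {snd i | i. i \<in> \<Sigma> \<and> fst i \<noteq> {} \<and> fst i \<subseteq> set (xs @ [m])}"
  proof (rule set_eqI, rule iffI)
    fix x assume "x \<in> snd st \<union> \<Union> {snd i | i. i \<in> \<Sigma> \<and> m \<in> fst i \<and> cnt i = 0}"
    then show "x \<in> \<Union> {snd i | i. i \<in> \<Sigma> \<and> fst i \<noteq> {} \<and> fst i \<subseteq> set (xs @ [m])}"
    proof
      assume "x \<in> snd st"
      then have "\<exists>i. i \<in> \<Sigma> \<and> fst i \<noteq> {} \<and> fst i \<subseteq> set xs \<and> x \<in> snd i" unfolding IH2 by auto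
      then obtain i where "i \<in> \<Sigma>" "fst i \<noteq> {}" "fst i \<subseteq> set xs" "x \<in> snd i" by blast
      then show ?thesis by (intro inU[where Q="\<lambda>i. i \<in> \<Sigma> \<and> fst i \<noteq> {} \<and> fst i \<subseteq> set (xs @ [m])"]) auto
    next
      assume "x \<in> \<Union> {snd i | i. i \<in> \<Sigma> \<and> m \<in> fst i \<and> cnt i = 0}"
      then have "\<exists>i. i \<in> \<Sigma> \<and> m \<in> fst i \<and> cnt i = 0 \<and> x \<in> snd i" by auto
      then obtain i where i: "i \<in> \<Sigma>" "m \<in> fst i" "cnt i = 0" "x \<in> snd i" by blast
      then have "fst i \<noteq> {}" "fst i \<subseteq> set (xs @ [m])" using z by auto
      then show ?thesis using i by (intro inU[where Q="\<lambda>i. i \<in> \<Sigma> \<and> fst i \<noteq> {} \<and> fst i \<subseteq> set (xs @ [m])"]) auto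
    qed
  next
    fix x assume "x \<in> \<Union> {snd i | i. i \<in> \<Sigma> \<and> fst i \<noteq> {} \<and> fst i \<subseteq> set (xs @ [m])}"
    then have "\<exists>i. i \<in> \<Sigma> \<and> fst i \<noteq> {} \<and> fst i \<subseteq> set (xs @ [m]) \<and> x \<in> snd i" by auto
    then obtain i where i: "i \<in> \<Sigma>" "fst i \<noteq> {}" "fst i \<subseteq> set (xs @ [m])" "x \<in> snd i" by blast
    show "x \<in> snd st \<union> \<Union> {snd i | i. i \<in> \<Sigma> \<and> m \<in> fst i \<and> cnt i = 0}"
    proof (cases "m \<in> fst i")
      case True then show ?thesis using i z by (intro UnI2 inU[where Q="\<lambda>i. i \<in> \<Sigma> \<and> m \<in> fst i \<and> cnt i = 0"]) auto
    next
      case False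
      then have "fst i \<subseteq> set xs" using i by auto
      then show ?thesis unfolding IH2 using i by (intro UnI1 inU[where Q="\<lambda>i. i \<in> \<Sigma> \<and> fst i \<noteq> {} \<and> fst i \<subseteq> set xs"]) auto
    qed
  qed
  show ?case unfolding eq using c1 c2 by simp
qed

lemma lcd_result:
  assumes "\<forall>i\<in>\<Sigma>. finite (fst i)" "distinct xs"
  shows "LinClosureDirect \<Sigma> xs = set xs \<union> \<Union> {snd i | i. i \<in> \<Sigma> \<and> fst i \<noteq> {} \<and> fst i \<subseteq> set xs}"
  using lcd_fold[OF assms] by (simp add: LinClosureDirect_def)

lemma co_ext: "closure_operator U \<phi> \<Longrightarrow> X \<subseteq> U \<Longrightarrow> X \<subseteq> \<phi> X"
  by (simp add: closure_operator_def)
lemma co_sub: "closure_operator U \<phi> \<Longrightarrow> X \<subseteq> U \<Longrightarrow> \<phi> X \<subseteq> U"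
  by (simp add: closure_operator_def)
lemma co_idem: "closure_operator U \<phi> \<Longrightarrow> X \<subseteq> U \<Longrightarrow> \<phi> (\<phi> X) = \<phi> X"
  by (simp add: closure_operator_def)
lemma co_mono: "closure_operator U \<phi> \<Longrightarrow> X \<subseteq> Y \<Longrightarrow> Y \<subseteq> U \<Longrightarrow> \<phi> X \<subseteq> \<phi> Y"
  by (simp add: closure_operator_def)

lemma co_empty:
  assumes co: "closure_operator U \<phi>" and st: "standard U \<phi>"
  shows "\<phi> {} = {}"
proof (rule ccontr)
  assume "\<phi> {} \<noteq> {}"
  then obtain c where c: "c \<in> \<phi> {}" by auto
  have cU: "c \<in> U" using co_sub[OF co, of "{}"] c by auto
  have s: "\<phi> {c} - {c} \<subseteq> U" using co_sub[OF co, of "{c}"] cU by auto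
  have "\<phi> {} \<subseteq> \<phi> (\<phi> {c} - {c})" using co_mono[OF co _ s] by auto
  moreover have "\<phi> (\<phi> {c} - {c}) = \<phi> {c} - {c}"
    using st cU by (auto simp: standard_def is_closed_def)
  ultimately show False using c by auto
qed

lemma ic_ext: "X \<subseteq> imp_closure \<Sigma> X"
  by (auto simp: imp_closure_def)
lemma ic_least: "X \<subseteq> Z \<Longrightarrow> (\<forall>(A,B)\<in>\<Sigma>. A \<subseteq> Z \<longrightarrow> B \<subseteq> Z) \<Longrightarrow> imp_closure \<Sigma> X \<subseteq> Z"
  unfolding imp_closure_def by (rule Inter_lower) auto
lemma ic_closed: "(A,B) \<in> \<Sigma> \<Longrightarrow> A \<subseteq> imp_closure \<Sigma> X \<Longrightarrow> B \<subseteq> imp_closure \<Sigma> X"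
  unfolding imp_closure_def
proof (rule Inter_greatest)
  fix Z assume "(A,B) \<in> \<Sigma>" "A \<subseteq> \<Inter> {Z. X \<subseteq> Z \<and> (\<forall>(A, B)\<in>\<Sigma>. A \<subseteq> Z \<longrightarrow> B \<subseteq> Z)}"
    and Z: "Z \<in> {Z. X \<subseteq> Z \<and> (\<forall>(A, B)\<in>\<Sigma>. A \<subseteq> Z \<longrightarrow> B \<subseteq> Z)}"
  then have "A \<subseteq> Z" by blast
  then show "B \<subseteq> Z" using Z \<open>(A,B) \<in> \<Sigma>\<close> by blast
qed

lemma exists_min_gen:
  assumes fU: "finite U" and co: "closure_operator U \<phi>" and S: "S \<subseteq> U"
    and c: "c \<in> \<phi> S" "c \<notin> S"
  shows "\<exists>A\<subseteq>S. min_gen U \<phi> A c"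
proof -
  obtain A where A: "A \<subseteq> S \<and> c \<in> \<phi> A" and m: "\<forall>B. B \<subseteq> S \<and> c \<in> \<phi> B \<longrightarrow> card A \<le> card B"
  proof -
    have "\<exists>A. (A \<subseteq> S \<and> c \<in> \<phi> A) \<and> (\<forall>B. B \<subseteq> S \<and> c \<in> \<phi> B \<longrightarrow> card A \<le> card B)"
      by (rule ex_has_least_nat[of "\<lambda>A. A \<subseteq> S \<and> c \<in> \<phi> A" S card]) (simp add: c)
    then show ?thesis using that by blast
  qed
  have fA: "finite A" using A S fU by (meson finite_subset)
  have "min_gen U \<phi> A c"
    unfolding min_gen_def
  proof (intro conjI allI impI)
    show "A \<subseteq> U" using A S by auto
    show "c \<in> \<phi> A" using A by auto
    show "c \<notin> A" using A c by auto
    fix A' assume "A' \<subset> A"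
    then have "card A' < card A" "A' \<subseteq> S" using fA psubset_card_mono A by auto
    then show "c \<notin> \<phi> A'" using m by (meson leD)
  qed
  then show ?thesis using A by auto
qed

lemma phi0_down:
  assumes co: "closure_operator U \<phi>" and A: "A \<subseteq> U"
  shows "phi0 U \<phi> A \<subseteq> (\<Union>a\<in>A. \<phi> {a})"
  unfolding phi0_def
proof (rule ic_least)
  show "A \<subseteq> (\<Union>a\<in>A. \<phi> {a})" using co_ext[OF co, of "{_}"] A by blast
  show "\<forall>(A', B)\<in>Sigma0 U \<phi>. A' \<subseteq> (\<Union>a\<in>A. \<phi> {a}) \<longrightarrow> B \<subseteq> (\<Union>a\<in>A. \<phi> {a})"
  proof (clarify)
    fix A' B x assume s: "(A', B) \<in> Sigma0 U \<phi>" and sub: "A' \<subseteq> (\<Union>a\<in>A. \<phi> {a})" and x: "x \<in> B"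
    from s obtain a c where ac: "A' = {a}" "B = {c}" "a \<in> U" "c \<in> \<phi> {a}"
      by (auto simp: Sigma0_def)
    then obtain b where b: "b \<in> A" "a \<in> \<phi> {b}" using sub by auto
    have bU: "{b} \<subseteq> U" using b A by auto
    have "\<phi> {a} \<subseteq> \<phi> (\<phi> {b})" using co_mono[OF co _ co_sub[OF co bU]] b by auto
    also have "\<dots> = \<phi> {b}" using co_idem[OF co bU] .
    finally show "x \<in> (\<Union>a\<in>A. \<phi> {a})" using ac x b by auto
  qed
qed

lemma min_gen_antichain:
  assumes co: "closure_operator U \<phi>" and mg: "min_gen U \<phi> A c"
    and x: "x \<in> A" "x' \<in> A" "x \<in> \<phi> {x'}"
  shows "x = x'"
proof (rule ccontr)
  assume ne: "x \<noteq> x'"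
  have AU: "A \<subseteq> U" using mg by (simp add: min_gen_def)
  let ?A = "A - {x}"
  have AU': "?A \<subseteq> U" using AU by auto
  have "\<phi> {x'} \<subseteq> \<phi> ?A" using co_mono[OF co _ AU'] x ne by auto
  then have "A \<subseteq> \<phi> ?A" using co_ext[OF co AU'] x by auto
  then have "\<phi> A \<subseteq> \<phi> (\<phi> ?A)" using co_mono[OF co _ co_sub[OF co AU']] by auto
  then have "c \<in> \<phi> ?A" using mg co_idem[OF co AU'] by (auto simp: min_gen_def)
  moreover have "?A \<subset> A" using x by auto
  ultimately show False using mg by (auto simp: min_gen_def)
qed

theorem proposition2:
  fixes U :: "'a set" and \<phi> :: "'a set \<Rightarrow> 'a set" and X :: "'a set"
  assumes "finite U" and "closure_operator U \<phi>" and "standard U \<phi>" and "X \<subseteq> U"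
  shows "(\<forall>ord. distinct ord \<and> set ord = X \<longrightarrow>
            LinClosureDirect (canonical_direct_unit_basis U \<phi>) ord = \<phi> X) \<and>
         (\<forall>ord. distinct ord \<and> set ord = phi0 U \<phi> X \<longrightarrow>
            LinClosureDirect (D_basis U \<phi>) ord = \<phi> X)"
proof -
  note fU = assms(1) and co = assms(2) and st = assms(3) and XU = assms(4)
  have e: "\<phi> {} = {}" using co_empty[OF co st] .
  have mg_ne: "A \<noteq> {}" if "min_gen U \<phi> A c" for A c
    using that e by (auto simp: min_gen_def)
  have mg_fin: "finite A" if "min_gen U \<phi> A c" for A c
    using that fU finite_subset by (auto simp: min_gen_def)
  have mg_sub: "\<phi> A \<subseteq> \<phi> S" if "min_gen U \<phi> A c" "A \<subseteq> S" "S \<subseteq> U" for A c S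
    using that co_mono[OF co] by auto
  have part1: "LinClosureDirect (canonical_direct_unit_basis U \<phi>) ord = \<phi> X"
    if o: "distinct ord" "set ord = X" for ord
  proof -
    let ?S = "canonical_direct_unit_basis U \<phi>"
    have fin: "\<forall>i\<in>?S. finite (fst i)" using mg_fin by (auto simp: canonical_direct_unit_basis_def)
    have r: "LinClosureDirect ?S ord = X \<union> \<Union> {snd i | i. i \<in> ?S \<and> fst i \<noteq> {} \<and> fst i \<subseteq> X}"
      using lcd_result[OF fin o(1)] o(2) by simp
    show ?thesis unfolding r
    proof (rule set_eqI, rule iffI)
      fix x assume "x \<in> X \<union> \<Union> {snd i | i. i \<in> ?S \<and> fst i \<noteq> {} \<and> fst i \<subseteq> X}"
      then show "x \<in> \<phi> X"
      proof
        assume "x \<in> X" then show ?thesis using co_ext[OF co XU] by auto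
      next
        assume "x \<in> \<Union> {snd i | i. i \<in> ?S \<and> fst i \<noteq> {} \<and> fst i \<subseteq> X}"
        then have "\<exists>i. i \<in> ?S \<and> x \<in> snd i \<and> fst i \<subseteq> X" by auto
        then obtain i where i: "i \<in> ?S" "x \<in> snd i" "fst i \<subseteq> X" by blast
        from i(1) obtain A c where Ac: "i = (A,{c})" "min_gen U \<phi> A c"
          unfolding canonical_direct_unit_basis_def by blast
        have "x \<in> \<phi> A" using Ac i(2) by (simp add: min_gen_def)
        moreover have "\<phi> A \<subseteq> \<phi> X" using mg_sub[OF Ac(2) _ XU] Ac i(3) by simp
        ultimately show ?thesis by blast
      qed
    next
      fix x assume x: "x \<in> \<phi> X"
      show "x \<in> X \<union> \<Union> {snd i | i. i \<in> ?S \<and> fst i \<noteq> {} \<and> fst i \<subseteq> X}"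
      proof (cases "x \<in> X")
        case False
        then obtain A where A: "A \<subseteq> X" "min_gen U \<phi> A x"
          using exists_min_gen[OF fU co XU x] by auto
        have "x \<in> U" using x co_sub[OF co XU] by auto
        then have "(A, {x}) \<in> ?S" using A by (auto simp: canonical_direct_unit_basis_def)
        then show ?thesis using A mg_ne[OF A(2)]
          by (intro UnI2 inU[where Q="\<lambda>i. i \<in> ?S \<and> fst i \<noteq> {} \<and> fst i \<subseteq> X" and i="(A,{x})"]) auto
      qed auto
    qed
  qed
  have part2: "LinClosureDirect (D_basis U \<phi>) ord = \<phi> X"
    if o: "distinct ord" "set ord = phi0 U \<phi> X" for ord
  proof -
    let ?S = "D_basis U \<phi>"
    define Y where "Y = phi0 U \<phi> X"
    have XY: "X \<subseteq> Y" unfolding Y_def phi0_def by (rule ic_ext)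
    have YX: "Y \<subseteq> \<phi> X" unfolding Y_def phi0_def
    proof (rule ic_least)
      show "X \<subseteq> \<phi> X" using co_ext[OF co XU] .
      show "\<forall>(A, B)\<in>Sigma0 U \<phi>. A \<subseteq> \<phi> X \<longrightarrow> B \<subseteq> \<phi> X"
      proof clarify
        fix A B x assume s: "(A, B) \<in> Sigma0 U \<phi>" "A \<subseteq> \<phi> X" "x \<in> B"
        then obtain a c where ac: "A = {a}" "B = {c}" "c \<in> \<phi> {a}" unfolding Sigma0_def by blast
        have "\<phi> {a} \<subseteq> \<phi> (\<phi> X)" using co_mono[OF co _ co_sub[OF co XU]] s ac by auto
        then show "x \<in> \<phi> X" using co_idem[OF co XU] ac s by auto
      qed
    qed
    have YU: "Y \<subseteq> U" using YX co_sub[OF co XU] by auto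
    have phY: "\<phi> Y = \<phi> X"
    proof
      show "\<phi> X \<subseteq> \<phi> Y" using co_mono[OF co XY YU] .
      show "\<phi> Y \<subseteq> \<phi> X" using co_mono[OF co YX co_sub[OF co XU]] co_idem[OF co XU] by auto
    qed
    have Ycl: "c \<in> Y" if "({a}, {c}) \<in> Sigma0 U \<phi>" "a \<in> Y" for a c
      using ic_closed[OF that(1), of X] that(2) unfolding Y_def phi0_def by auto
    have p0Y: "phi0 U \<phi> A \<subseteq> Y" if "A \<subseteq> Y" for A
      unfolding phi0_def
    proof (rule ic_least)
      show "A \<subseteq> Y" using that .
      show "\<forall>(A, B)\<in>Sigma0 U \<phi>. A \<subseteq> Y \<longrightarrow> B \<subseteq> Y"
        using Ycl by (auto simp: Sigma0_def)
    qed
    have p0mono: "phi0 U \<phi> A' \<subseteq> phi0 U \<phi> A" if "A' \<subseteq> phi0 U \<phi> A" for A A'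
      unfolding phi0_def
    proof (rule ic_least)
      show "A' \<subseteq> imp_closure (Sigma0 U \<phi>) A" using that by (simp add: phi0_def)
      show "\<forall>(A', B)\<in>Sigma0 U \<phi>. A' \<subseteq> imp_closure (Sigma0 U \<phi>) A \<longrightarrow> B \<subseteq> imp_closure (Sigma0 U \<phi>) A"
      proof (intro ballI impI, clarify)
        fix A'' B x assume "(A'', B) \<in> Sigma0 U \<phi>" "A'' \<subseteq> imp_closure (Sigma0 U \<phi>) A" "x \<in> B"
        then show "x \<in> imp_closure (Sigma0 U \<phi>) A" using ic_closed[of A'' B] by blast
      qed
    qed
    have fin: "\<forall>i\<in>?S. finite (fst i)"
      using mg_fin by (auto simp: D_basis_def Sigma0_def min_D_gen_def)
    have r: "LinClosureDirect ?S ord = Y \<union> \<Union> {snd i | i. i \<in> ?S \<and> fst i \<noteq> {} \<and> fst i \<subseteq> Y}"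
      using lcd_result[OF fin o(1)] o(2) Y_def by simp
    show ?thesis unfolding r
    proof (rule set_eqI, rule iffI)
      fix x assume "x \<in> Y \<union> \<Union> {snd i | i. i \<in> ?S \<and> fst i \<noteq> {} \<and> fst i \<subseteq> Y}"
      then show "x \<in> \<phi> X"
      proof
        assume "x \<in> Y" then show ?thesis using YX by auto
      next
        assume "x \<in> \<Union> {snd i | i. i \<in> ?S \<and> fst i \<noteq> {} \<and> fst i \<subseteq> Y}"
        then have "\<exists>i. i \<in> ?S \<and> x \<in> snd i \<and> fst i \<subseteq> Y" by auto
        then obtain i where i: "i \<in> ?S" "x \<in> snd i" "fst i \<subseteq> Y" by blast
        have "snd i \<subseteq> \<phi> (fst i)"
        proof (cases "i \<in> Sigma0 U \<phi>")
          case True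
          then obtain a c where "i = ({a},{c})" "c \<in> \<phi> {a}" unfolding Sigma0_def by blast
          then show ?thesis by simp
        next
          case False
          then have "i \<in> {(A, {c}) | A c. c \<in> U \<and> min_D_gen U \<phi> A c}" using i(1) unfolding D_basis_def by blast
          then obtain A c where "i = (A,{c})" "min_D_gen U \<phi> A c" by blast
          then show ?thesis by (simp add: min_D_gen_def min_gen_def)
        qed
        then have A: "fst i \<subseteq> Y" "x \<in> \<phi> (fst i)" using i by auto
        then show ?thesis using co_mono[OF co A(1) YU] phY by auto
      qed
    next
      fix x assume x: "x \<in> \<phi> X"
      show "x \<in> Y \<union> \<Union> {snd i | i. i \<in> ?S \<and> fst i \<noteq> {} \<and> fst i \<subseteq> Y}"
      proof (cases "x \<in> Y")
        case False
        have xU: "x \<in> U" using x co_sub[OF co XU] by auto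
        have xY: "x \<in> \<phi> Y" using x phY by auto
        let ?P = "\<lambda>A. min_gen U \<phi> A x \<and> A \<subseteq> Y"
        have "\<exists>A. ?P A" using exists_min_gen[OF fU co YU xY False] by auto
        then obtain A0 where "?P A0" by blast
        then have "\<exists>A. ?P A \<and> (\<forall>B. ?P B \<longrightarrow> card (phi0 U \<phi> A) \<le> card (phi0 U \<phi> B))"
          by (rule ex_has_least_nat)
        then obtain A where PA: "?P A" and Am: "\<forall>B. ?P B \<longrightarrow> card (phi0 U \<phi> A) \<le> card (phi0 U \<phi> B)"
          by blast
        have AU: "A \<subseteq> U" using PA by (auto simp: min_gen_def)
        have fA: "finite A" using mg_fin PA by blast
        have "min_D_gen U \<phi> A x"
          unfolding min_D_gen_def
        proof (intro conjI allI impI)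
          show mA: "min_gen U \<phi> A x" using PA by auto
          show "x \<notin> phi0 U \<phi> A" using p0Y PA False by auto
          show "2 \<le> card A"
          proof (rule ccontr)
            assume "\<not> 2 \<le> card A"
            moreover have "card A \<noteq> 0" using fA mg_ne[OF mA] by auto
            ultimately have "card A = 1" by auto
            then obtain a where a: "A = {a}" using card_1_singletonE by blast
            have "({a}, {x}) \<in> Sigma0 U \<phi>" using a mA xU by (auto simp: Sigma0_def min_gen_def)
            then have "x \<in> Y" using Ycl a PA by auto
            then show False using False by auto
          qed
          fix A' assume A': "min_gen U \<phi> A' x \<and> A' \<subseteq> phi0 U \<phi> A"
          have A'U: "A' \<subseteq> U" using A' by (auto simp: min_gen_def)
          have "A' \<subseteq> Y" using A' p0Y PA by auto
          then have c1: "card (phi0 U \<phi> A) \<le> card (phi0 U \<phi> A')" using Am A' by auto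
          have s1: "phi0 U \<phi> A' \<subseteq> phi0 U \<phi> A" using p0mono A' by auto
          have "finite (phi0 U \<phi> A)" using p0Y PA YU fU by (meson finite_subset subset_trans)
          then have eq: "phi0 U \<phi> A' = phi0 U \<phi> A" using card_seteq[OF _ s1 c1] by auto
          have "A' \<subseteq> A"
          proof
            fix y assume y: "y \<in> A'"
            then obtain a where a: "a \<in> A" "y \<in> \<phi> {a}" using phi0_down[OF co AU] A' by blast
            have "a \<in> phi0 U \<phi> A'" using a(1) eq ic_ext[of A "Sigma0 U \<phi>"] unfolding phi0_def by blast
            then obtain y' where y': "y' \<in> A'" "a \<in> \<phi> {y'}" using phi0_down[OF co A'U] by blast
            have y'U: "{y'} \<subseteq> U" using y' A'U by auto
            have aU: "{a} \<subseteq> U" using a AU by auto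
            have "\<phi> {a} \<subseteq> \<phi> {y'}"
              using co_mono[OF co _ co_sub[OF co y'U]] co_idem[OF co y'U] y' by auto
            then have "y \<in> \<phi> {y'}" using a(2) by blast
            then have "y = y'" using min_gen_antichain[OF co _ y y'(1)] A' by blast
            then have "\<phi> {a} = \<phi> {y}"
              using co_mono[OF co _ co_sub[OF co aU]] co_idem[OF co aU] a y'
                \<open>\<phi> {a} \<subseteq> \<phi> {y'}\<close> by auto
            moreover have "a \<in> U" "y \<in> U" using a AU y A'U by auto
            ultimately have "a = y" using st unfolding standard_def by blast
            then show "y \<in> A" using a by auto
          qed
          show "A' = A"
          proof (rule ccontr)
            assume "A' \<noteq> A"
            then have "A' \<subset> A" using \<open>A' \<subseteq> A\<close> by blast
            then have "x \<notin> \<phi> A'" using mA unfolding min_gen_def by blast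
            then show False using A' unfolding min_gen_def by blast
          qed
        qed
        then have "(A, {x}) \<in> ?S" using xU unfolding D_basis_def by blast
        then show ?thesis using PA mg_ne[of A x]
          by (intro UnI2 inU[where Q="\<lambda>i. i \<in> ?S \<and> fst i \<noteq> {} \<and> fst i \<subseteq> Y" and i="(A,{x})"]) auto
      qed auto
    qed
  qed
  show ?thesis using part1 part2 by blast
qed

end
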